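(* Let $f:X\to Y$ be a quasi-isometry of semimetric spaces. Then $f$ maps each $\sim$-class of $X$ quasi-isometrically into a $\sim$-class of $Y$, and this induces an isomorphism of partially ordered sets $X/\!\sim\ \to\ Y/\!\sim$.
   Context: A semimetric space is a set $X$ with $d:X\times X\to\mathbb{R}^{\ge0}\cup\{\infty\}$ such that $d(x,y)=0$ iff $x=y$ and $d(x,z)\le d(x,y)+d(y,z)$ (no symmetry assumed; arithmetic with $\infty$ as usual). A map $f:X\to Y$ is a quasi-isometry if there are constants $1\le\lambda<\infty$, $0<\epsilon<\infty$, $0\le\mu<\infty$ with $\frac1\lambda d(x,y)-\epsilon\le d(f(x),f(y))\le\lambda d(x,y)+\epsilon$ for all $x,y\in X$ and, for every $y\in Y$, some $x\in X$ with $\max(d(y,f(x)),d(f(x),y))\le\mu$. On a semimetric space define the preorder $x\lesssim y$ iff $d(y,x)<\infty$, and $x\sim y$ iff $x\lesssim y$ and $y\lesssim x$; the $\sim$-classes are the strongly connected components, and $X/\!\sim$ is the set of $\sim$-classes partially ordered by the order induced from $\lesssim$. *)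

theory Defs
  imports Main "HOL-Library.Extended_Nonnegative_Real"
begin

definition semimetric :: "'a set \<Rightarrow> ('a \<Rightarrow> 'a \<Rightarrow> ennreal) \<Rightarrow> bool" where
  "semimetric X d \<longleftrightarrow>
     (\<forall>x\<in>X. \<forall>y\<in>X. d x y = 0 \<longleftrightarrow> x = y) \<and>
     (\<forall>x\<in>X. \<forall>y\<in>X. \<forall>z\<in>X. d x z \<le> d x y + d y z)"

text \<open>The two-sided quasi-isometric inequalities with constants lam, eps.
  Subtraction in ennreal truncates at 0, which is harmless since distances
  are nonnegative.\<close>
definition qi_bounds ::
  "'a set \<Rightarrow> ('a \<Rightarrow> 'a \<Rightarrow> ennreal) \<Rightarrow> ('b \<Rightarrow> 'b \<Rightarrow> ennreal) \<Rightarrow> ('a \<Rightarrow> 'b)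
     \<Rightarrow> real \<Rightarrow> real \<Rightarrow> bool" where
  "qi_bounds X dX dY f lam eps \<longleftrightarrow>
     (\<forall>x\<in>X. \<forall>y\<in>X.
        ennreal (1 / lam) * dX x y - ennreal eps \<le> dY (f x) (f y) \<and>
        dY (f x) (f y) \<le> ennreal lam * dX x y + ennreal eps)"

definition quasi_isometry ::
  "'a set \<Rightarrow> ('a \<Rightarrow> 'a \<Rightarrow> ennreal) \<Rightarrow> 'b set \<Rightarrow> ('b \<Rightarrow> 'b \<Rightarrow> ennreal) \<Rightarrow> ('a \<Rightarrow> 'b) \<Rightarrow> bool" where
  "quasi_isometry X dX Y dY f \<longleftrightarrow>
     f ` X \<subseteq> Y \<and>
     (\<exists>lam eps mu :: real. 1 \<le> lam \<and> 0 < eps \<and> 0 \<le> mu \<and>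
        qi_bounds X dX dY f lam eps \<and>
        (\<forall>y\<in>Y. \<exists>x\<in>X. max (dY y (f x)) (dY (f x) y) \<le> ennreal mu))"

definition qi_embedding ::
  "'a set \<Rightarrow> ('a \<Rightarrow> 'a \<Rightarrow> ennreal) \<Rightarrow> 'b set \<Rightarrow> ('b \<Rightarrow> 'b \<Rightarrow> ennreal) \<Rightarrow> ('a \<Rightarrow> 'b) \<Rightarrow> bool" where
  "qi_embedding X dX Y dY f \<longleftrightarrow>
     f ` X \<subseteq> Y \<and>
     (\<exists>lam eps :: real. 1 \<le> lam \<and> 0 < eps \<and> qi_bounds X dX dY f lam eps)"

text \<open>x \<lesssim> y iff d y x < oo; x \<sim> y iff both.\<close>
definition sim_rel :: "'a set \<Rightarrow> ('a \<Rightarrow> 'a \<Rightarrow> ennreal) \<Rightarrow> ('a \<times> 'a) set" where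
  "sim_rel X d = {(x, y). x \<in> X \<and> y \<in> X \<and> d y x < \<infinity> \<and> d x y < \<infinity>}"

definition sim_classes :: "'a set \<Rightarrow> ('a \<Rightarrow> 'a \<Rightarrow> ennreal) \<Rightarrow> 'a set set" where
  "sim_classes X d = X // sim_rel X d"

text \<open>Partial order on classes induced from \<lesssim>: C \<le> D iff x \<lesssim> y for (some, equivalently all)
  representatives x \<in> C, y \<in> D.\<close>
definition class_le :: "('a \<Rightarrow> 'a \<Rightarrow> ennreal) \<Rightarrow> 'a set \<Rightarrow> 'a set \<Rightarrow> bool" where
  "class_le d C D \<longleftrightarrow> (\<exists>x\<in>C. \<exists>y\<in>D. d y x < \<infinity>)"

end

theory Submission
  imports Defs
begin

lemma fin1: assumes "(lam::real) \<ge> 1" "ennreal (1/lam) * a - ennreal e \<le> b" "b < \<infinity>" shows "a < \<infinity>"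
proof (rule ccontr)
  assume "\<not> a < \<infinity>" hence a: "a = \<infinity>" by (simp add: less_top[symmetric])
  have p: "ennreal (1/lam) > 0" using assms(1) by simp
  have "ennreal (1/lam) * \<infinity> = \<infinity>" using p by (simp add: ennreal_mult_eq_top_iff)
  hence eq: "ennreal (1/lam) * a - ennreal e = \<infinity>" unfolding a by simp
  have "\<infinity> \<le> b" using assms(2) unfolding eq .
  hence "b = \<infinity>" by (simp add: top_unique)
  thus False using assms(3) by simp
qed
lemma fin2: assumes "b \<le> ennreal lam * a + ennreal e" "a < \<infinity>" shows "b < \<infinity>"
proof -
  have "a \<noteq> \<infinity>" using assms(2) by auto
  hence "ennreal lam * a + ennreal e < \<infinity>" by (simp add: ennreal_mult_less_top less_top)
  thus ?thesis using assms(1) by (rule le_less_trans[rotated])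
qed
lemma fin_add: "(a::ennreal) < \<infinity> \<Longrightarrow> b < \<infinity> \<Longrightarrow> a + b < \<infinity>"
  by (simp add: less_top)

lemma class_rep: assumes "equiv A r" "C \<in> A//r" "x \<in> C" shows "C = r``{x}"
proof -
  obtain a where a: "a \<in> A" "C = r``{a}" using assms(2) by (rule quotientE)
  hence "(a, x) \<in> r" using assms(3) by simp
  thus ?thesis using a assms(1) by (simp add: equiv_class_eq)
qed

lemma class_sub: assumes "equiv A r" "C \<in> A//r" "x \<in> C" shows "x \<in> A"
  using in_quotient_imp_subset[OF assms(1,2)] assms(3) by blast

lemma class_ne: assumes "equiv A r" "C \<in> A//r" shows "\<exists>x. x \<in> C"
proof -
  obtain a where a: "a \<in> A" "C = r``{a}" using assms(2) by (rule quotientE)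
  thus ?thesis using equiv_class_self[OF assms(1) a(1)] by blast
qed

lemma sm_tri: "semimetric X d \<Longrightarrow> x \<in> X \<Longrightarrow> y \<in> X \<Longrightarrow> z \<in> X \<Longrightarrow> d x z \<le> d x y + d y z"
  unfolding semimetric_def by simp

lemma sm_zero: "semimetric X d \<Longrightarrow> x \<in> X \<Longrightarrow> d x x = 0"
  unfolding semimetric_def by simp

lemma equiv_sim: assumes "semimetric X d" shows "equiv X (sim_rel X d)"
proof (rule equivI)
  show "sim_rel X d \<subseteq> X \<times> X" unfolding sim_rel_def by auto
  have "d x x = 0" if "x \<in> X" for x using assms that by (rule sm_zero)
  then show "refl_on X (sim_rel X d)"
    unfolding refl_on_def sim_rel_def by auto
  show "sym (sim_rel X d)" unfolding sym_def sim_rel_def by auto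
  show "trans (sim_rel X d)"
  proof (rule transI)
    fix x y z assume 1: "(x, y) \<in> sim_rel X d" and 2: "(y, z) \<in> sim_rel X d"
    have h: "x \<in> X" "y \<in> X" "d y x < \<infinity>" "d x y < \<infinity>" "z \<in> X" "d z y < \<infinity>" "d y z < \<infinity>"
      using 1 2 unfolding sim_rel_def by auto
    have t: "d z x \<le> d z y + d y x" "d x z \<le> d x y + d y z" using sm_tri[OF assms] h(1,2,5) by blast+
    have "d z x < \<infinity>" using t(1) fin_add[OF h(6) h(3)] by (rule le_less_trans)
    moreover have "d x z < \<infinity>" using t(2) fin_add[OF h(4) h(7)] by (rule le_less_trans)
    ultimately show "(x, z) \<in> sim_rel X d" using h unfolding sim_rel_def by auto
  qed
qed

theorem proposition4p4:
  fixes X :: "'a set" and dX :: "'a \<Rightarrow> 'a \<Rightarrow> ennreal"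
    and Y :: "'b set" and dY :: "'b \<Rightarrow> 'b \<Rightarrow> ennreal"
    and f :: "'a \<Rightarrow> 'b"
  assumes "semimetric X dX" and "semimetric Y dY"
    and "quasi_isometry X dX Y dY f"
  shows "\<exists>F. (\<forall>C\<in>sim_classes X dX.
                 f ` C \<subseteq> F C \<and> qi_embedding C dX (F C) dY f) \<and>
             bij_betw F (sim_classes X dX) (sim_classes Y dY) \<and>
             (\<forall>C\<in>sim_classes X dX. \<forall>C'\<in>sim_classes X dX.
                 class_le dX C C' \<longleftrightarrow> class_le dY (F C) (F C'))"
proof -
  let ?R = "sim_rel X dX" and ?S = "sim_rel Y dY"
  have eR: "equiv X ?R" and eS: "equiv Y ?S" using equiv_sim assms by auto
  have fXY: "f ` X \<subseteq> Y" using assms(3) unfolding quasi_isometry_def by (rule conjunct1)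
  have "\<exists>lam eps mu :: real. 1 \<le> lam \<and> 0 < eps \<and> 0 \<le> mu \<and>
        qi_bounds X dX dY f lam eps \<and>
        (\<forall>y\<in>Y. \<exists>x\<in>X. max (dY y (f x)) (dY (f x) y) \<le> ennreal mu)"
    using assms(3) unfolding quasi_isometry_def by (rule conjunct2)
  then obtain lam eps mu :: real where lam: "1 \<le> lam" "0 < eps" "0 \<le> mu"
    and qb: "qi_bounds X dX dY f lam eps"
    and cs: "\<forall>y\<in>Y. \<exists>x\<in>X. max (dY y (f x)) (dY (f x) y) \<le> ennreal mu"
    by blast
  have key: "dX x y < \<infinity> \<longleftrightarrow> dY (f x) (f y) < \<infinity>" if "x \<in> X" "y \<in> X" for x y
  proof -
    have b: "ennreal (1 / lam) * dX x y - ennreal eps \<le> dY (f x) (f y)"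
       "dY (f x) (f y) \<le> ennreal lam * dX x y + ennreal eps"
      using qb that unfolding qi_bounds_def by blast+
    show ?thesis using fin1[OF lam(1) b(1)] fin2[OF b(2)] by blast
  qed
  have simf: "(x, y) \<in> ?R \<longleftrightarrow> (f x, f y) \<in> ?S" if "x \<in> X" "y \<in> X" for x y
    using key that fXY unfolding sim_rel_def by auto
  have CR0: "C = ?R `` {x}" "x \<in> X" if "C \<in> sim_classes X dX" "x \<in> C" for C x
    using that unfolding sim_classes_def by (rule class_rep[OF eR], rule class_sub[OF eR])
  define F where "F C = ?S `` {f (SOME x. x \<in> C)}" for C
  have FC: "F C = ?S `` {f x}" if "C \<in> sim_classes X dX" "x \<in> C" for C x
  proof -
    have Cx: "C = ?R `` {x}" by (rule CR0(1)[OF that])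
    have xX: "x \<in> X" by (rule CR0(2)[OF that])
    have "(SOME x. x \<in> C) \<in> C" using that(2) by (rule someI)
    hence "(SOME x. x \<in> C) \<in> ?R `` {x}" by (simp only: Cx[symmetric])
    hence "(x, SOME x. x \<in> C) \<in> ?R" by simp
    moreover have "(SOME x. x \<in> C) \<in> X" using calculation unfolding sim_rel_def by simp
    ultimately have "(f x, f (SOME x. x \<in> C)) \<in> ?S" using simf xX by blast
    hence "?S `` {f x} = ?S `` {f (SOME x. x \<in> C)}" by (rule equiv_class_eq[OF eS])
    thus ?thesis unfolding F_def by simp
  qed
  have CR: "C = ?R `` {x}" "x \<in> X" if "C \<in> sim_classes X dX" "x \<in> C" for C x
    using that unfolding sim_classes_def by (rule class_rep[OF eR], rule class_sub[OF eR])
  have DS: "D = ?S `` {y}" "y \<in> Y" if "D \<in> sim_classes Y dY" "y \<in> D" for D y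
    using that unfolding sim_classes_def by (rule class_rep[OF eS], rule class_sub[OF eS])
  have ne: "\<exists>x. x \<in> C" if "C \<in> sim_classes X dX" for C
    using that unfolding sim_classes_def by (rule class_ne[OF eR])
  have P1: "f ` C \<subseteq> F C \<and> qi_embedding C dX (F C) dY f" if C: "C \<in> sim_classes X dX" for C
  proof -
    obtain x0 where x0: "x0 \<in> C" using ne C by blast
    have sub: "f ` C \<subseteq> F C"
    proof
      fix z assume "z \<in> f ` C" then obtain x where x: "x \<in> C" "z = f x" by auto
      have "(x0, x) \<in> ?R" using CR(1)[OF C x0] x(1) by simp
      hence "(f x0, f x) \<in> ?S" using simf CR(2)[OF C x0] CR(2)[OF C x(1)] by blast
      thus "z \<in> F C" using FC[OF C x0] x by simp
    qed
    have "qi_bounds C dX dY f lam eps" using qb CR(2)[OF C] unfolding qi_bounds_def by blast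
    thus ?thesis using sub lam unfolding qi_embedding_def by blast
  qed
  have inY: "F C \<in> sim_classes Y dY" if C: "C \<in> sim_classes X dX" for C
  proof -
    obtain x0 where x0: "x0 \<in> C" using ne C by blast
    have "f x0 \<in> Y" using fXY CR(2)[OF C x0] by auto
    thus ?thesis using FC[OF C x0] unfolding sim_classes_def by (simp add: quotientI)
  qed
  have inj: "inj_on F (sim_classes X dX)"
  proof (rule inj_onI)
    fix C C' assume C: "C \<in> sim_classes X dX" and C': "C' \<in> sim_classes X dX" and eq: "F C = F C'"
    obtain x where x: "x \<in> C" using ne C by blast
    obtain y where y: "y \<in> C'" using ne C' by blast
    have xX: "x \<in> X" and yX: "y \<in> X" using CR(2)[OF C x] CR(2)[OF C' y] by auto
    have "f x \<in> Y" using fXY xX by auto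
    hence "f x \<in> F C" using FC[OF C x] equiv_class_self[OF eS] by simp
    hence "(f y, f x) \<in> ?S" using eq FC[OF C' y] by simp
    hence "(y, x) \<in> ?R" using simf xX yX by blast
    hence "?R `` {y} = ?R `` {x}" by (rule equiv_class_eq[OF eR])
    thus "C = C'" using CR(1)[OF C x] CR(1)[OF C' y] by simp
  qed
  have surj: "F ` sim_classes X dX = sim_classes Y dY"
  proof
    show "F ` sim_classes X dX \<subseteq> sim_classes Y dY" using inY by auto
    show "sim_classes Y dY \<subseteq> F ` sim_classes X dX"
    proof
      fix D assume D: "D \<in> sim_classes Y dY"
      obtain y where yD: "y \<in> D" using class_ne[OF eS] D unfolding sim_classes_def by auto
      have yY: "y \<in> Y" using DS[OF D yD] by simp
      obtain x where x: "x \<in> X" "max (dY y (f x)) (dY (f x) y) \<le> ennreal mu" using cs yY by blast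
      have m: "dY y (f x) \<le> ennreal mu" "dY (f x) y \<le> ennreal mu" using x(2) by simp_all
      have "dY y (f x) < \<infinity>" using le_less_trans[OF m(1) ennreal_less_top] by simp
      moreover have "dY (f x) y < \<infinity>" using le_less_trans[OF m(2) ennreal_less_top] by simp
      ultimately have "(y, f x) \<in> ?S" using yY fXY x(1) unfolding sim_rel_def by auto
      hence "?S `` {y} = ?S `` {f x}" by (rule equiv_class_eq[OF eS])
      hence Dfx: "D = ?S `` {f x}" using DS[OF D yD] by simp
      let ?C = "?R `` {x}"
      have C: "?C \<in> sim_classes X dX" using x(1) unfolding sim_classes_def by (simp add: quotientI)
      have "x \<in> ?C" using equiv_class_self[OF eR x(1)] .
      hence "F ?C = D" using FC[OF C] Dfx by simp
      thus "D \<in> F ` sim_classes X dX" using C by blast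
    qed
  qed
  have ord: "class_le dX C C' \<longleftrightarrow> class_le dY (F C) (F C')"
    if C: "C \<in> sim_classes X dX" and C': "C' \<in> sim_classes X dX" for C C'
  proof
    assume "class_le dX C C'"
    then obtain x y where xy: "x \<in> C" "y \<in> C'" "dX y x < \<infinity>" unfolding class_le_def by blast
    have "dY (f y) (f x) < \<infinity>" using key[OF CR(2)[OF C' xy(2)] CR(2)[OF C xy(1)]] xy(3) by simp
    moreover have "f x \<in> F C" using P1[OF C] xy(1) by blast
    moreover have "f y \<in> F C'" using P1[OF C'] xy(2) by blast
    ultimately show "class_le dY (F C) (F C')" unfolding class_le_def by blast
  next
    assume "class_le dY (F C) (F C')"
    then obtain u v where uv: "u \<in> F C" "v \<in> F C'" "dY v u < \<infinity>" unfolding class_le_def by blast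
    obtain x where x: "x \<in> C" using ne C by blast
    obtain y where y: "y \<in> C'" using ne C' by blast
    have xX: "x \<in> X" and yX: "y \<in> X" using CR(2)[OF C x] CR(2)[OF C' y] by auto
    have "(f x, u) \<in> ?S" using uv(1) unfolding FC[OF C x] by simp
    moreover have "(f y, v) \<in> ?S" using uv(2) unfolding FC[OF C' y] by simp
    ultimately have "(f x, u) \<in> ?S" "(f y, v) \<in> ?S" by auto
    hence h: "dY u (f x) < \<infinity>" "dY (f y) v < \<infinity>" "u \<in> Y" "v \<in> Y" "f x \<in> Y" "f y \<in> Y"
      unfolding sim_rel_def by auto
    have "dY (f y) (f x) \<le> dY (f y) v + dY v (f x)" "dY v (f x) \<le> dY v u + dY u (f x)"
      using sm_tri[OF assms(2) h(6) h(4) h(5)] sm_tri[OF assms(2) h(4) h(3) h(5)] by auto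
    hence t: "dY (f y) (f x) \<le> dY (f y) v + dY v (f x)" "dY v (f x) \<le> dY v u + dY u (f x)" by auto
    have "dY v (f x) < \<infinity>" using fin_add[OF uv(3) h(1)] t(2) by (rule le_less_trans[rotated])
    hence "dY (f y) (f x) < \<infinity>" using fin_add[OF h(2)] t(1) by (meson le_less_trans)
    hence "dX y x < \<infinity>" using key[OF yX xX] by simp
    thus "class_le dX C C'" using x y unfolding class_le_def by blast
  qed
  have bij: "bij_betw F (sim_classes X dX) (sim_classes Y dY)"
    unfolding bij_betw_def using inj surj by (rule conjI)
  show ?thesis
    apply (rule exI[of _ F])
    apply (intro conjI ballI)
       apply (erule P1[THEN conjunct1])
      apply (erule P1[THEN conjunct2])
     apply (rule bij)
    apply (rule ord; assumption)
    done
qed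

end
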